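(* Let $B$ be a norming region and $x\in S$. Let $(X_n)_{n\ge0}$ be a Markov chain with law $P_h^x$, regarded as the quasi-path $[w]$ with $w_n=X_n$ for $n\ge0$ and $w_n=\partial$ for $n<0$. Then the random coloured tree obtained by applying the $B$-biased decoration kernel $\bar\Gamma^{\mathrm{deco}}$ to it has law $\bar{\mathbb P}^{(x,\mathrm{blue})}_B$. In particular, $P_h^x$-almost every path enters $B$.
   Context: $S$ countable, $p=(p_{x,y})$ stochastic on $S$, $(d_x)_{x\in S}$ offspring distributions on $\mathbb N_0$, $m_x=\sum_m m\,d_x(m)$, $q_{x,y}=m_xp_{x,y}$, $Q=(q_{x,y})$, Green's function $g=\sum_{n\ge0}Q^n$ assumed finite entrywise. In a branching Markov chain (BMC$(d,p)$: each individual at $z$ independently has a $d_z$-distributed number of children at independent $p(z,\cdot)$-distributed locations; individuals carry independent uniform labels in $[0,1]$ and a pointer to their parent's label), $\mathcal H_B$ is the set of individuals located in $B$ with no strict ancestor located in $B$. A norming region is a finite $B\subset S$ with $\sum_{y\in B}g(x,y)>0$ for all $x$; $h(x)=\mathbb E^x[\#\mathcal H_B]\in(0,\infty)$. $P_h^x$: law of the Markov chain started at $x$ with substochastic transition matrix $p^h_{x,y}=\mathbf 1_{B^c}(x)q_{x,y}h(y)/h(x)$, sent to an absorbing cemetery $\partial\notin S$ with the missing mass. $d^{\mathrm{s.b.}}_x(n)=n\,d_x(n)/m_x$. Quasi-paths: $\bar S=S\cup\{\partial\}$; a path $w\in\bar S^{\mathbb Z}$ with $w_n\in S$ exactly for $t_\partial\le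 n<t^\partial$ ($t_\partial<t^\partial$ in $\mathbb Z\cup\{\pm\infty\}$) and $w_n\to\partial$ as $n\to-\infty$; $[w]$ its class modulo time shifts. $B$-biased decoration $\bar\Gamma^{\mathrm{deco}}([w],\cdot)$: (1) for each $k\in\mathbb Z\cap[t_\partial,t^\partial)$ create a blue individual with independent uniform label $i_k$ located at $w_k$, with predecessor $i_{k-1}$ (no predecessor if $k=t_\partial$); (2) to each such spine individual at $x\notin B$ attach independently, with probability $d^{\mathrm{s.b.}}_x(n)$, $n-1$ white children at independent $p(x,\cdot)$-locations with uniform labels, each the root of an independent white BMC$(d,p)$; (3) each spine individual at $x\in B$ is the root of an independent white BMC$(d,p)$. $B$-biased BMC: two-type BMC with types white/blue; white individuals and blue individuals in $B$ reproduce as in BMC$(d,p)$ with white children; a blue individual at $x\notin B$ has $n$ children with ordered locations $y_1,\dots,y_n$ with probability $\frac1{h(x)}d_x(n)\prod_kp_{x,y_k}\sum_kh(y_k)$, and then the $k$-th is coloured blue with probability $h(y_k)/\sum_lh(y_l)$, the others white. $\bar{\mathbb P}^{(x,\mathrm{blue})}_B$ is its law started from a single blue individual at $x$ (children receiving independent uniform labels). *)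

theory Defs
  imports "HOL-Probability.Probability" "HOL-Library.Multiset"
begin

datatype colour = White | Blue

text \<open>Finite rooted unordered trees whose vertices carry a mark (location, colour).
  An individual with uniform labels in [0,1] and parent pointers is identified with
  such an unordered tree (the labels are i.i.d. and independent of everything, so the
  law of the labelled tree is determined by the law of its isomorphism class).\<close>
datatype 'a utree = UNode 'a "'a utree multiset"

fun seq_pmf :: "'b pmf list \<Rightarrow> 'b list pmf" where
  "seq_pmf [] = return_pmf []"
| "seq_pmf (M # Ms) = bind_pmf M (\<lambda>a. map_pmf (Cons a) (seq_pmf Ms))"

definition mean_off :: "('a \<Rightarrow> nat pmf) \<Rightarrow> 'a \<Rightarrow> ennreal" where
  "mean_off d x = (\<integral>\<^sup>+ k. ennreal (real k) \<partial>measure_pmf (d x))"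

definition qmat :: "('a \<Rightarrow> nat pmf) \<Rightarrow> ('a \<Rightarrow> 'a pmf) \<Rightarrow> 'a \<Rightarrow> 'a \<Rightarrow> ennreal" where
  "qmat d p x y = mean_off d x * ennreal (pmf (p x) y)"

primrec qpow :: "('a \<Rightarrow> nat pmf) \<Rightarrow> ('a \<Rightarrow> 'a pmf) \<Rightarrow> nat \<Rightarrow> 'a \<Rightarrow> 'a \<Rightarrow> ennreal" where
  "qpow d p 0 x y = (if x = y then 1 else 0)"
| "qpow d p (Suc n) x y = (\<Sum>\<^sub>\<infinity>z. qpow d p n x z * qmat d p z y)"

definition green :: "('a \<Rightarrow> nat pmf) \<Rightarrow> ('a \<Rightarrow> 'a pmf) \<Rightarrow> 'a \<Rightarrow> 'a \<Rightarrow> ennreal" where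
  "green d p x y = (\<Sum>n. qpow d p n x y)"

definition norming_region :: "('a \<Rightarrow> nat pmf) \<Rightarrow> ('a \<Rightarrow> 'a pmf) \<Rightarrow> 'a set \<Rightarrow> bool" where
  "norming_region d p B \<longleftrightarrow> finite B \<and> (\<forall>x. (\<Sum>y\<in>B. green d p x y) > 0)"

definition white_kids :: "('a \<Rightarrow> nat pmf) \<Rightarrow> ('a \<Rightarrow> 'a pmf) \<Rightarrow> ('a \<Rightarrow> 't pmf) \<Rightarrow> 'a \<Rightarrow> 't multiset pmf" where
  "white_kids d p f z =
     bind_pmf (d z) (\<lambda>k. bind_pmf (seq_pmf (replicate k (p z)))
       (\<lambda>ys. map_pmf mset (seq_pmf (map f ys))))"

primrec bmc :: "('a \<Rightarrow> nat pmf) \<Rightarrow> ('a \<Rightarrow> 'a pmf) \<Rightarrow> nat \<Rightarrow> 'a \<Rightarrow> ('a \<times> colour) utree pmf" where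
  "bmc d p 0 = (\<lambda>z. return_pmf (UNode (z, White) {#}))"
| "bmc d p (Suc n) = (\<lambda>z. map_pmf (UNode (z, White)) (white_kids d p (bmc d p n) z))"

primrec hcount :: "'a set \<Rightarrow> ('a \<times> colour) utree \<Rightarrow> nat" where
  "hcount B (UNode a M) = (if fst a \<in> B then 1 else sum_mset (image_mset (hcount B) M))"

text \<open>h(x) = E^x[#H_B]; by monotone convergence this is the limit (sup) of the
  expected counts within the depth-n truncations.\<close>
definition hfun :: "('a \<Rightarrow> nat pmf) \<Rightarrow> ('a \<Rightarrow> 'a pmf) \<Rightarrow> 'a set \<Rightarrow> 'a \<Rightarrow> ennreal" where
  "hfun d p B x = (SUP n. \<integral>\<^sup>+ t. ennreal (real (hcount B t)) \<partial>measure_pmf (bmc d p n x))"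

definition ph :: "('a \<Rightarrow> nat pmf) \<Rightarrow> ('a \<Rightarrow> 'a pmf) \<Rightarrow> 'a set \<Rightarrow> 'a \<Rightarrow> 'a \<Rightarrow> ennreal" where
  "ph d p B x y = (if x \<in> B then 0 else qmat d p x y * hfun d p B y / hfun d p B x)"

text \<open>Transition kernel on S + cemetery (None = \<partial>), the missing mass going to \<partial>,
  which is absorbing.\<close>
definition hkernel :: "('a \<Rightarrow> nat pmf) \<Rightarrow> ('a \<Rightarrow> 'a pmf) \<Rightarrow> 'a set \<Rightarrow> 'a option \<Rightarrow> 'a option pmf" where
  "hkernel d p B s = (case s of
      None \<Rightarrow> return_pmf None
    | Some x \<Rightarrow> embed_pmf (\<lambda>s'. case s' of
          Some y \<Rightarrow> enn2real (ph d p B x y)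
        | None \<Rightarrow> enn2real (1 - (\<Sum>\<^sub>\<infinity>y. ph d p B x y))))"

text \<open>Law of (w_1, ..., w_n) of the chain started at w_0 = o.\<close>
primrec hpath :: "('a \<Rightarrow> nat pmf) \<Rightarrow> ('a \<Rightarrow> 'a pmf) \<Rightarrow> 'a set \<Rightarrow> nat \<Rightarrow> 'a option \<Rightarrow> 'a option list pmf" where
  "hpath d p B 0 = (\<lambda>s. return_pmf [])"
| "hpath d p B (Suc n) = (\<lambda>s. bind_pmf (hkernel d p B s) (\<lambda>s'. map_pmf (Cons s') (hpath d p B n s')))"

definition dsb :: "('a \<Rightarrow> nat pmf) \<Rightarrow> 'a \<Rightarrow> nat pmf" where
  "dsb d x = embed_pmf (\<lambda>k. real k * pmf (d x) k / enn2real (mean_off d x))"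

text \<open>deco d p B n z ws: depth-n truncation of the decoration of the spine
  z = w_0, ws = [w_1, ..., w_n] (None = \<partial>).\<close>
primrec deco :: "('a \<Rightarrow> nat pmf) \<Rightarrow> ('a \<Rightarrow> 'a pmf) \<Rightarrow> 'a set \<Rightarrow> nat \<Rightarrow> 'a \<Rightarrow> 'a option list
                   \<Rightarrow> ('a \<times> colour) utree pmf" where
  "deco d p B 0 = (\<lambda>z ws. return_pmf (UNode (z, Blue) {#}))"
| "deco d p B (Suc n) = (\<lambda>z ws.
     bind_pmf (case ws of Some z' # ws' \<Rightarrow> map_pmf (\<lambda>t. {#t#}) (deco d p B n z' ws')
                         | _ \<Rightarrow> return_pmf {#})
       (\<lambda>spine.
        if z \<in> B then map_pmf (\<lambda>M. UNode (z, Blue) (M + spine)) (white_kids d p (bmc d p n) z)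
        else bind_pmf (dsb d z) (\<lambda>k. bind_pmf (seq_pmf (replicate (k - 1) (p z)))
               (\<lambda>ys. map_pmf (\<lambda>ts. UNode (z, Blue) (mset ts + spine)) (seq_pmf (map (bmc d p n) ys))))))"

text \<open>Offspring of a blue individual at x outside B: ordered locations ys and the
  index k of the blue child.\<close>
definition biased_off :: "('a \<Rightarrow> nat pmf) \<Rightarrow> ('a \<Rightarrow> 'a pmf) \<Rightarrow> 'a set \<Rightarrow> 'a \<Rightarrow> ('a list \<times> nat) pmf" where
  "biased_off d p B x = embed_pmf (\<lambda>(ys, k).
     (let h = (\<lambda>y. enn2real (hfun d p B y)); S = sum_list (map h ys) in
      if k < length ys then
        (1 / h x) * pmf (d x) (length ys) * prod_list (map (pmf (p x)) ys) * S * (h (ys ! k) / S)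
      else 0))"

primrec bbmc :: "('a \<Rightarrow> nat pmf) \<Rightarrow> ('a \<Rightarrow> 'a pmf) \<Rightarrow> 'a set \<Rightarrow> nat \<Rightarrow> 'a \<Rightarrow> ('a \<times> colour) utree pmf" where
  "bbmc d p B 0 = (\<lambda>z. return_pmf (UNode (z, Blue) {#}))"
| "bbmc d p B (Suc n) = (\<lambda>z.
     if z \<in> B then map_pmf (UNode (z, Blue)) (white_kids d p (bmc d p n) z)
     else bind_pmf (biased_off d p B z) (\<lambda>(ys, k).
        map_pmf (\<lambda>ts. UNode (z, Blue) (mset ts))
          (seq_pmf (map (\<lambda>i. if i = k then bbmc d p B n (ys ! i) else bmc d p n (ys ! i))
                        [0..<length ys]))))"

end

theory Submission
  imports Defs
begin

lemma infsum_nn: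
  fixes f :: "'a::countable \<Rightarrow> ennreal"
  shows "infsum f UNIV = (\<integral>\<^sup>+x. f x \<partial>count_space UNIV)"
proof -
  have eq: "infsum f UNIV = (SUP F\<in>{F. finite F \<and> F \<subseteq> UNIV}. sum f F)"
    by (rule nonneg_infsum_complete) simp
  have le1: "sum f F \<le> (\<integral>\<^sup>+x. f x \<partial>count_space UNIV)" if "finite F" for F
  proof -
    have "sum f F = (\<integral>\<^sup>+x. f x \<partial>count_space F)"
      using that by (simp add: nn_integral_count_space_finite)
    also have "\<dots> = (\<integral>\<^sup>+x. f x * indicator F x \<partial>count_space UNIV)"
      by (simp add: nn_integral_count_space_indicator)
    also have "\<dots> \<le> (\<integral>\<^sup>+x. f x \<partial>count_space UNIV)"
      by (intro nn_integral_mono) (simp split: split_indicator)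
    finally show ?thesis .
  qed
  define F where "F n = {x::'a. to_nat x < n}" for n
  have finF: "finite (F n)" for n
  proof -
    have "F n = to_nat -` {..<n}" by (auto simp: F_def)
    moreover have "finite (to_nat -` {..<n} :: 'a set)"
      by (rule finite_vimageI) auto
    ultimately show ?thesis by simp
  qed
  have incF: "incseq (\<lambda>n x. f x * indicator (F n) x)"
    by (auto simp: incseq_def le_fun_def F_def split: split_indicator)
  have "(\<integral>\<^sup>+x. f x \<partial>count_space UNIV) \<le> (\<integral>\<^sup>+x. (SUP n. f x * indicator (F n) x) \<partial>count_space UNIV)"
  proof (intro nn_integral_mono)
    fix x
    have "x \<in> F (Suc (to_nat x))" by (simp add: F_def)
    then show "f x \<le> (SUP n. f x * indicator (F n) x)"
      by (intro SUP_upper2[where i="Suc (to_nat x)"]) auto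
  qed
  also have "\<dots> = (SUP n. \<integral>\<^sup>+x. f x * indicator (F n) x \<partial>count_space UNIV)"
    by (rule nn_integral_monotone_convergence_SUP[OF incF]) simp
  also have "\<dots> = (SUP n. sum f (F n))"
    using finF by (simp add: nn_integral_count_space_indicator[symmetric] nn_integral_count_space_finite)
  also have "\<dots> \<le> (SUP F\<in>{F. finite F \<and> F \<subseteq> UNIV}. sum f F)"
    using finF by (intro SUP_mono) auto
  finally have "(\<integral>\<^sup>+x. f x \<partial>count_space UNIV) \<le> infsum f UNIV" using eq by simp
  moreover have "infsum f UNIV \<le> (\<integral>\<^sup>+x. f x \<partial>count_space UNIV)"
    unfolding eq using le1 by (intro SUP_least) auto
  ultimately show ?thesis by (rule antisym[rotated])
qed

lemma seq_pmf_len: "ls \<in> set_pmf (seq_pmf Ms) \<Longrightarrow> length ls = length Ms"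
  by (induction Ms arbitrary: ls) auto

lemma nn_integral_seq_sum:
  fixes G :: "'b \<Rightarrow> ennreal"
  shows "(\<integral>\<^sup>+ts. sum_list (map G ts) \<partial>seq_pmf Ms) = sum_list (map (\<lambda>M. \<integral>\<^sup>+t. G t \<partial>measure_pmf M) Ms)"
proof (induction Ms)
  case Nil
  then show ?case by simp
next
  case (Cons M Ms)
  have "(\<integral>\<^sup>+ts. sum_list (map G ts) \<partial>seq_pmf (M # Ms))
      = (\<integral>\<^sup>+a. (\<integral>\<^sup>+ts. G a + sum_list (map G ts) \<partial>seq_pmf Ms) \<partial>M)"
    by simp
  also have "\<dots> = (\<integral>\<^sup>+a. G a + (\<integral>\<^sup>+ts. sum_list (map G ts) \<partial>seq_pmf Ms) \<partial>M)"
    by (intro nn_integral_cong) (simp add: nn_integral_add measure_pmf.emeasure_space_1)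
  also have "\<dots> = (\<integral>\<^sup>+a. G a \<partial>M) + (\<integral>\<^sup>+ts. sum_list (map G ts) \<partial>seq_pmf Ms)"
    by (simp add: nn_integral_add measure_pmf.emeasure_space_1)
  finally show ?case using Cons by simp
qed

lemma sum_list_replicate_ennreal: "sum_list (replicate k (c::ennreal)) = of_nat k * c"
  by (induction k) (auto simp: algebra_simps)


lemma ennreal_sum_mset_image:
  "(of_nat (sum_mset (image_mset g (mset ts))) :: ennreal) = sum_list (map (\<lambda>t. of_nat (g t)) ts)"
  by (induction ts) auto

lemma white_kids_exp:
  "(\<integral>\<^sup>+M. of_nat (sum_mset (image_mset g M)) \<partial>white_kids d p f z)
     = mean_off d z * (\<integral>\<^sup>+y. (\<integral>\<^sup>+t. of_nat (g t) \<partial>f y) \<partial>p z)"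
proof -
  let ?G = "\<lambda>t. (of_nat (g t) :: ennreal)"
  let ?c = "\<integral>\<^sup>+y. (\<integral>\<^sup>+t. ?G t \<partial>f y) \<partial>p z"
  have "(\<integral>\<^sup>+M. of_nat (sum_mset (image_mset g M)) \<partial>white_kids d p f z)
     = (\<integral>\<^sup>+k. (\<integral>\<^sup>+ys. (\<integral>\<^sup>+ts. sum_list (map ?G ts) \<partial>seq_pmf (map f ys)) \<partial>seq_pmf (replicate k (p z))) \<partial>d z)"
    unfolding white_kids_def by (simp only: nn_integral_bind_pmf nn_integral_map_pmf ennreal_sum_mset_image)
  also have "\<dots> = (\<integral>\<^sup>+k. (\<integral>\<^sup>+ys. sum_list (map (\<lambda>y. \<integral>\<^sup>+t. ?G t \<partial>f y) ys) \<partial>seq_pmf (replicate k (p z))) \<partial>d z)"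
    by (simp only: nn_integral_seq_sum map_map o_def)
  also have "\<dots> = (\<integral>\<^sup>+k. of_nat k * ?c \<partial>d z)"
    by (simp only: nn_integral_seq_sum map_replicate sum_list_replicate_ennreal)
  also have "\<dots> = mean_off d z * ?c"
    by (simp add: nn_integral_multc mean_off_def ennreal_of_nat_eq_real_of_nat)
  finally show ?thesis .
qed

definition En :: "('a \<Rightarrow> nat pmf) \<Rightarrow> ('a \<Rightarrow> 'a pmf) \<Rightarrow> 'a set \<Rightarrow> nat \<Rightarrow> 'a \<Rightarrow> ennreal" where
  "En d p B n z = (\<integral>\<^sup>+ t. ennreal (real (hcount B t)) \<partial>measure_pmf (bmc d p n z))"

lemma En_0: "En d p B 0 z = (if z \<in> B then 1 else 0)"
  by (simp add: En_def)

lemma En_Suc: "En d p B (Suc n) z = (if z \<in> B then 1 else mean_off d z * (\<integral>\<^sup>+y. En d p B n y \<partial>p z))"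
  by (simp add: En_def ennreal_of_nat_eq_real_of_nat[symmetric] white_kids_exp[where g="hcount B"] del: of_nat_sum_mset)


lemma En_mono: "En d p B n z \<le> En d p B (Suc n) z"
proof (induction n arbitrary: z)
  case 0
  then show ?case by (simp add: En_0 En_Suc)
next
  case (Suc n)
  show ?case
    by (subst (1 2) En_Suc) (auto intro!: mult_left_mono nn_integral_mono Suc)
qed

lemma En_incseq: "incseq (\<lambda>n. En d p B n z)"
  by (rule incseq_SucI) (rule En_mono)

lemma En_incseq_fun: "incseq (\<lambda>n y. En d p B n y)"
  by (rule incseq_SucI) (auto simp: le_fun_def En_mono)

lemma hfun_SUP: "hfun d p B z = (SUP n. En d p B n z)"
  by (simp add: hfun_def En_def)

lemma SUP_shift_inc:
  fixes f :: "nat \<Rightarrow> 'b::complete_lattice"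
  assumes "incseq f" shows "(SUP n. f (Suc n)) = (SUP n. f n)"
proof (rule antisym)
  show "(SUP n. f (Suc n)) \<le> (SUP n. f n)"
    by (rule SUP_mono) auto
  show "(SUP n. f n) \<le> (SUP n. f (Suc n))"
    by (rule SUP_mono) (use assms in \<open>auto simp: incseq_Suc_iff\<close>)
qed

lemma hfun_B: "z \<in> B \<Longrightarrow> hfun d p B z = 1"
proof -
  assume "z \<in> B"
  then have "En d p B n z = 1" for n by (cases n) (auto simp: En_0 En_Suc)
  then show ?thesis by (simp add: hfun_SUP)
qed

lemma hfun_harm: "z \<notin> B \<Longrightarrow> hfun d p B z = mean_off d z * (\<integral>\<^sup>+y. hfun d p B y \<partial>p z)"
proof -
  assume z: "z \<notin> B"
  have "hfun d p B z = (SUP n. En d p B (Suc n) z)"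
    by (simp add: hfun_SUP SUP_shift_inc[OF En_incseq])
  also have "\<dots> = (SUP n. mean_off d z * (\<integral>\<^sup>+y. En d p B n y \<partial>p z))"
    using z by (simp add: En_Suc)
  also have "\<dots> = mean_off d z * (SUP n. (\<integral>\<^sup>+y. En d p B n y \<partial>p z))"
    by (simp add: SUP_mult_left_ennreal)
  also have "\<dots> = mean_off d z * (\<integral>\<^sup>+y. (SUP n. En d p B n y) \<partial>p z)"
    by (subst nn_integral_monotone_convergence_SUP[OF En_incseq_fun]) auto
  finally show ?thesis by (simp add: hfun_SUP)
qed


lemma qpow_Suc_nn: "qpow d p (Suc n) x y = (\<integral>\<^sup>+z. qpow d p n x z * qmat d p z y \<partial>count_space UNIV)"
  for x y :: "'a::countable"
  by (simp add: infsum_nn)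

declare qpow.simps(2)[simp del]

lemma q_int:
  fixes p :: "'a \<Rightarrow> 'a pmf"
  shows "mean_off d z * (\<integral>\<^sup>+y. f y \<partial>p z) = (\<integral>\<^sup>+w. qmat d p z w * f w \<partial>count_space UNIV)"
  by (simp add: nn_integral_measure_pmf qmat_def nn_integral_cmult[symmetric] mult.assoc)

lemma int_single:
  fixes c :: "'a \<Rightarrow> ennreal"
  shows "(\<integral>\<^sup>+z. (if z = x then c z else 0) \<partial>count_space UNIV) = c x"
proof -
  have "(\<integral>\<^sup>+z. (if z = x then c z else 0) \<partial>count_space UNIV) = (\<integral>\<^sup>+z. c x * indicator {x} z \<partial>count_space UNIV)"
    by (intro nn_integral_cong) (auto split: split_indicator)
  then show ?thesis by simp
qed

lemma int_single':
  fixes c :: "'a \<Rightarrow> ennreal"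
  shows "(\<integral>\<^sup>+z. (if x = z then c z else 0) \<partial>count_space UNIV) = c x"
  using int_single[of x c] by (simp add: eq_commute cong: if_cong)

lemma if01_mult: "((if P then 1 else 0) * (a::ennreal)) = (if P then a else 0)"
  "(a * (if P then 1 else 0)) = (if P then a else 0)"
  by auto

lemma qpow_left: "qpow d p (Suc n) x y = (\<integral>\<^sup>+w. qmat d p x w * qpow d p n w y \<partial>count_space UNIV)"
  for x y :: "'a::countable"
proof (induction n arbitrary: y)
  case 0
  show ?case
    by (simp add: qpow_Suc_nn if01_mult int_single int_single')
next
  case (Suc n)
  have "qpow d p (Suc (Suc n)) x y = (\<integral>\<^sup>+v. (\<integral>\<^sup>+w. qmat d p x w * qpow d p n w v \<partial>count_space UNIV) * qmat d p v y \<partial>count_space UNIV)"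
    by (simp add: qpow_Suc_nn[of _ _ "Suc n"] Suc)
  also have "\<dots> = (\<integral>\<^sup>+v. (\<integral>\<^sup>+w. qmat d p x w * qpow d p n w v * qmat d p v y \<partial>count_space UNIV) \<partial>count_space UNIV)"
    by (simp add: nn_integral_multc[symmetric])
  also have "\<dots> = (\<integral>\<^sup>+w. (\<integral>\<^sup>+v. qmat d p x w * qpow d p n w v * qmat d p v y \<partial>count_space UNIV) \<partial>count_space UNIV)"
    by (rule nn_integral_count_space_nn_integral[symmetric]) auto
  also have "\<dots> = (\<integral>\<^sup>+w. qmat d p x w * qpow d p (Suc n) w y \<partial>count_space UNIV)"
    by (simp add: qpow_Suc_nn[of _ _ n] nn_integral_cmult[symmetric] mult.assoc)
  finally show ?case .
qed

lemma En_le_qpow: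
  fixes z :: "'a::countable"
  assumes finB: "finite B"
  shows "En d p B n z \<le> (\<Sum>y\<in>B. \<Sum>k\<le>n. qpow d p k z y)"
proof (induction n arbitrary: z)
  case 0
  show ?case using finB by (auto simp: En_0)
next
  case (Suc n)
  show ?case
  proof (cases "z \<in> B")
    case True
    have "(1::ennreal) = qpow d p 0 z z" by simp
    also have "\<dots> \<le> (\<Sum>k\<le>Suc n. qpow d p k z z)"
      by (rule member_le_sum) auto
    also have "\<dots> \<le> (\<Sum>y\<in>B. \<Sum>k\<le>Suc n. qpow d p k z y)"
      by (rule member_le_sum) (use True finB in auto)
    finally show ?thesis using True by (simp add: En_Suc)
  next
    case False
    have "En d p B (Suc n) z = (\<integral>\<^sup>+w. qmat d p z w * En d p B n w \<partial>count_space UNIV)"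
      using False by (simp add: En_Suc q_int)
    also have "\<dots> \<le> (\<integral>\<^sup>+w. qmat d p z w * (\<Sum>y\<in>B. \<Sum>k\<le>n. qpow d p k w y) \<partial>count_space UNIV)"
      by (intro nn_integral_mono mult_left_mono Suc) auto
    also have "\<dots> = (\<Sum>y\<in>B. \<Sum>k\<le>n. (\<integral>\<^sup>+w. qmat d p z w * qpow d p k w y \<partial>count_space UNIV))"
      by (simp add: sum_distrib_left nn_integral_sum)
    also have "\<dots> = (\<Sum>y\<in>B. \<Sum>k\<le>n. qpow d p (Suc k) z y)"
      by (simp add: qpow_left)
    also have "\<dots> \<le> (\<Sum>y\<in>B. \<Sum>k\<le>Suc n. qpow d p k z y)"
    proof (intro sum_mono)
      fix y
      have "(\<Sum>k\<le>n. qpow d p (Suc k) z y) = (\<Sum>k\<in>Suc ` {..n}. qpow d p k z y)"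
        by (simp add: sum.reindex)
      also have "\<dots> \<le> (\<Sum>k\<le>Suc n. qpow d p k z y)"
        by (rule sum_mono2) auto
      finally show "(\<Sum>k\<le>n. qpow d p (Suc k) z y) \<le> (\<Sum>k\<le>Suc n. qpow d p k z y)" .
    qed
    finally show ?thesis .
  qed
qed

lemma hfun_finite:
  fixes z :: "'a::countable"
  assumes gf: "\<forall>u v. green d p u v < \<top>" and finB: "finite B"
  shows "hfun d p B z < \<top>"
proof -
  have "En d p B n z \<le> (\<Sum>y\<in>B. green d p z y)" for n
  proof -
    have "(\<Sum>k\<le>n. qpow d p k z y) \<le> green d p z y" for y
      unfolding green_def by (rule sum_le_suminf[OF summableI]) auto
    then have "(\<Sum>y\<in>B. \<Sum>k\<le>n. qpow d p k z y) \<le> (\<Sum>y\<in>B. green d p z y)"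
      by (intro sum_mono)
    then show ?thesis using En_le_qpow[OF finB] order_trans by blast
  qed
  then have "hfun d p B z \<le> (\<Sum>y\<in>B. green d p z y)"
    unfolding hfun_SUP by (intro SUP_least)
  also have "\<dots> < \<top>" using gf finB by (simp add: less_top)
  finally show ?thesis .
qed

lemma hfun_pos_step:
  fixes z :: "'a::countable"
  shows "qpow d p k z w > 0 \<Longrightarrow> hfun d p B w > 0 \<Longrightarrow> hfun d p B z > 0"
proof (induction k arbitrary: w)
  case 0
  then show ?case by (auto split: if_splits)
next
  case (Suc k)
  have "\<exists>v. qpow d p k z v * qmat d p v w \<noteq> 0"
  proof (rule ccontr)
    assume "\<not> ?thesis"
    then have "\<And>v. qpow d p k z v * qmat d p v w = 0" by simp
    then have "qpow d p (Suc k) z w = 0" unfolding qpow_Suc_nn by (simp del: mult_eq_0_iff)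
    with Suc.prems show False by simp
  qed
  then obtain v where v1: "qpow d p k z v > 0" and v2: "qmat d p v w > 0"
    by (auto simp: zero_less_iff_neq_zero)
  have "hfun d p B v > 0"
  proof (cases "v \<in> B")
    case True then show ?thesis by (simp add: hfun_B)
  next
    case False
    have "qmat d p v w * hfun d p B w \<le> (\<integral>\<^sup>+u. qmat d p v u * hfun d p B u \<partial>count_space UNIV)"
      by (rule nn_integral_ge_point) simp
    also have "\<dots> = hfun d p B v"
      using False by (simp add: hfun_harm q_int)
    finally have le: "qmat d p v w * hfun d p B w \<le> hfun d p B v" .
    have "0 < qmat d p v w * hfun d p B w"
      using v2 Suc.prems(2) by (simp add: ennreal_zero_less_mult_iff)
    then show ?thesis using le by (rule less_le_trans)
  qed
  then show ?case using Suc.IH v1 by blast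
qed

lemma hfun_pos:
  fixes z :: "'a::countable"
  assumes nr: "norming_region d p B"
  shows "hfun d p B z > 0"
proof -
  from nr have "(\<Sum>y\<in>B. green d p z y) > 0" by (simp add: norming_region_def)
  then obtain y where y: "y \<in> B" "green d p z y \<noteq> 0"
    using sum.neutral[of B "green d p z"] by (metis order_less_irrefl)
  have "\<exists>k. qpow d p k z y \<noteq> 0"
  proof (rule ccontr)
    assume "\<not> ?thesis"
    then have "green d p z y = (\<Sum>n. 0)" unfolding green_def by simp
    with y show False by simp
  qed
  then obtain k where "qpow d p k z y \<noteq> 0" by blast
  then have "qpow d p k z y > 0" by (simp add: zero_less_iff_neq_zero)
  moreover have "hfun d p B y > 0" using y by (simp add: hfun_B)
  ultimately show ?thesis by (rule hfun_pos_step)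
qed


lemma ediv_cancel:
  fixes a b c e :: ennreal
  assumes "0 < c" "c < top"
  shows "a * c / b * (e / c) = a * e / b"
proof -
  have "c * inverse c = 1" using assms ennreal_divide_self[of c] by (simp add: divide_ennreal_def)
  have "a * c * inverse b * (e * inverse c) = a * e * inverse b * (c * inverse c)"
    by (simp add: ac_simps)
  also have "\<dots> = a * e * inverse b" using \<open>c * inverse c = 1\<close> by simp
  finally show ?thesis by (simp add: divide_ennreal_def)
qed

context
  fixes d :: "'a::countable \<Rightarrow> nat pmf" and p :: "'a \<Rightarrow> 'a pmf" and B :: "'a set"
  assumes gf: "\<forall>u v. green d p u v < \<top>" and nr: "norming_region d p B"
begin

lemma finB: "finite B" using nr by (simp add: norming_region_def)

lemma h_fin: "hfun d p B z < \<top>" using hfun_finite[OF gf finB] .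
lemma h_pos: "hfun d p B z > 0" using hfun_pos[OF nr] .
lemma h_ne0: "hfun d p B z \<noteq> 0" using h_pos[of z] by auto
lemma h_netop: "hfun d p B z \<noteq> \<top>" using h_fin[of z] by auto

lemma int_h_pos: "(\<integral>\<^sup>+y. hfun d p B y \<partial>p z) > 0"
proof (rule ccontr)
  assume "\<not> ?thesis"
  then have "(\<integral>\<^sup>+y. hfun d p B y \<partial>p z) = 0" by simp
  then have "AE y in p z. hfun d p B y = 0"
    by (subst (asm) nn_integral_0_iff_AE) auto
  then have "AE y in p z. False" using h_ne0 by simp
  then show False by simp
qed

lemma m_pos: "z \<notin> B \<Longrightarrow> mean_off d z > 0"
  using hfun_harm[of z B d p] h_pos[of z] by (auto simp: zero_less_iff_neq_zero)

lemma m_fin: "z \<notin> B \<Longrightarrow> mean_off d z < \<top>"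
proof (rule ccontr)
  assume z: "z \<notin> B" and "\<not> mean_off d z < \<top>"
  then have "mean_off d z = \<top>" by (simp add: less_top[symmetric])
  then have "hfun d p B z = \<top>" using hfun_harm[OF z] int_h_pos[of z]
    by (simp add: ennreal_top_mult)
  with h_netop[of z] show False by simp
qed

lemma int_h_fin: "z \<notin> B \<Longrightarrow> (\<integral>\<^sup>+y. hfun d p B y \<partial>p z) < \<top>"
proof (rule ccontr)
  assume z: "z \<notin> B" and "\<not> (\<integral>\<^sup>+y. hfun d p B y \<partial>p z) < \<top>"
  then have "(\<integral>\<^sup>+y. hfun d p B y \<partial>p z) = \<top>" by (simp add: less_top[symmetric])
  then have "hfun d p B z = \<top>" using hfun_harm[OF z] m_pos[OF z]
    by (simp add: ennreal_mult_top)
  with h_netop[of z] show False by simp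
qed

lemma qmat_fin: "z \<notin> B \<Longrightarrow> qmat d p z y < \<top>"
  using m_fin by (simp add: qmat_def ennreal_mult_less_top)

lemma ph_fin: "ph d p B z y < \<top>"
proof (cases "z \<in> B")
  case False
  have "qmat d p z y * hfun d p B y < \<top>"
    using qmat_fin[OF False] h_fin by (simp add: ennreal_mult_less_top)
  moreover have "inverse (hfun d p B z) < \<top>"
    using h_ne0[of z] by (simp add: less_top[symmetric])
  ultimately have "qmat d p z y * hfun d p B y * inverse (hfun d p B z) < \<top>"
    by (simp only: ennreal_mult_less_top) simp
  then show ?thesis using False by (simp add: ph_def divide_ennreal_def)
qed (simp add: ph_def)

lemma ph_sum: "z \<notin> B \<Longrightarrow> (\<integral>\<^sup>+y. ph d p B z y \<partial>count_space UNIV) = 1"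
proof -
  assume z: "z \<notin> B"
  have "(\<integral>\<^sup>+y. ph d p B z y \<partial>count_space UNIV)
      = (\<integral>\<^sup>+y. qmat d p z y * hfun d p B y \<partial>count_space UNIV) / hfun d p B z"
    using z by (simp add: ph_def divide_ennreal_def nn_integral_multc)
  also have "\<dots> = hfun d p B z / hfun d p B z"
    using z by (simp add: hfun_harm[OF z] q_int)
  also have "\<dots> = 1" using h_ne0 h_fin by simp
  finally show ?thesis .
qed

lemma ph_sum_B: "z \<in> B \<Longrightarrow> (\<integral>\<^sup>+y. ph d p B z y \<partial>count_space UNIV) = 0"
  by (simp add: ph_def)

end

lemma nn_integral_option:
  fixes g :: "'b option \<Rightarrow> ennreal"
  shows "(\<integral>\<^sup>+s. g s \<partial>count_space UNIV) = g None + (\<integral>\<^sup>+y. g (Some y) \<partial>count_space UNIV)"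
proof -
  have "(\<integral>\<^sup>+s. g s \<partial>count_space UNIV) = (\<integral>\<^sup>+s. g None * indicator {None} s + g s * indicator (range Some) s \<partial>count_space UNIV)"
    by (intro nn_integral_cong) (auto split: split_indicator option.splits)
  also have "\<dots> = g None * emeasure (count_space UNIV) {None} + (\<integral>\<^sup>+s. g s * indicator (range Some) s \<partial>count_space UNIV)"
    by (subst nn_integral_add) (auto simp: nn_integral_cmult_indicator)
  also have "(\<integral>\<^sup>+s. g s * indicator (range Some) s \<partial>count_space UNIV) = (\<integral>\<^sup>+s. g s \<partial>count_space (range Some))"
    by (simp add: nn_integral_count_space_indicator)
  also have "\<dots> = (\<integral>\<^sup>+y. g (Some y) \<partial>count_space UNIV)"
    by (rule nn_integral_bij_count_space[symmetric]) (simp add: inj_on_imp_bij_betw)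
  finally show ?thesis by simp
qed

context
  fixes d :: "'a::countable \<Rightarrow> nat pmf" and p :: "'a \<Rightarrow> 'a pmf" and B :: "'a set"
  assumes gf: "\<forall>u v. green d p u v < \<top>" and nr: "norming_region d p B"
begin

lemma hkernel_pmf:
  assumes c: "(\<integral>\<^sup>+y. ph d p B z y \<partial>count_space UNIV) \<le> 1"
  shows "pmf (hkernel d p B (Some z)) (Some y) = enn2real (ph d p B z y)"
    and "pmf (hkernel d p B (Some z)) None = enn2real (1 - (\<integral>\<^sup>+y. ph d p B z y \<partial>count_space UNIV))"
proof -
  let ?c = "\<integral>\<^sup>+y. ph d p B z y \<partial>count_space UNIV"
  define f where "f = (\<lambda>s'. case s' of
          Some y \<Rightarrow> enn2real (ph d p B z y)
        | None \<Rightarrow> enn2real (1 - (\<Sum>\<^sub>\<infinity>y. ph d p B z y)))"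
  have f_eq: "f = (\<lambda>s'. case s' of
          Some y \<Rightarrow> enn2real (ph d p B z y)
        | None \<Rightarrow> enn2real (1 - ?c))"
    unfolding f_def by (subst infsum_nn) (rule refl)
  have nn: "\<And>s. 0 \<le> f s" by (simp add: f_def split: option.splits)
  have fin1: "1 - ?c < \<top>" using c by (simp add: diff_less_top_ennreal)
  have "(\<integral>\<^sup>+s. ennreal (f s) \<partial>count_space UNIV) = ennreal (enn2real (1 - ?c)) + (\<integral>\<^sup>+y. ennreal (enn2real (ph d p B z y)) \<partial>count_space UNIV)"
    by (simp add: nn_integral_option f_eq)
  also have "\<dots> = (1 - ?c) + ?c"
    using fin1 ph_fin[OF gf nr] by simp
  also have "\<dots> = 1" using c by (simp add: diff_add_cancel_ennreal)
  finally have norm: "(\<integral>\<^sup>+s. ennreal (f s) \<partial>count_space UNIV) = 1" .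
  have hk: "hkernel d p B (Some z) = embed_pmf f"
    by (simp add: hkernel_def f_def)
  show "pmf (hkernel d p B (Some z)) (Some y) = enn2real (ph d p B z y)"
    unfolding hk by (subst pmf_embed_pmf[OF nn norm]) (simp add: f_def)
  show "pmf (hkernel d p B (Some z)) None = enn2real (1 - ?c)"
    unfolding hk by (subst pmf_embed_pmf[OF nn norm]) (simp add: f_eq)
qed

lemma hkernel_B: "z \<in> B \<Longrightarrow> hkernel d p B (Some z) = return_pmf None"
proof -
  assume z: "z \<in> B"
  have c: "(\<integral>\<^sup>+y. ph d p B z y \<partial>count_space UNIV) = 0" using z by (simp add: ph_def)
  show ?thesis
  proof (rule pmf_eqI)
    fix s show "pmf (hkernel d p B (Some z)) s = pmf (return_pmf None) s"
      using hkernel_pmf[of z] c z by (cases s) (auto simp: ph_def)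
  qed
qed

definition Kp :: "'a \<Rightarrow> 'a pmf" where
  "Kp z = embed_pmf (\<lambda>y. enn2real (ph d p B z y))"

lemma Kp_pmf: "z \<notin> B \<Longrightarrow> pmf (Kp z) y = enn2real (ph d p B z y)"
  unfolding Kp_def
  by (rule pmf_embed_pmf) (use ph_sum[OF gf nr] ph_fin[OF gf nr] in \<open>auto simp: ennreal_enn2real\<close>)

lemma Kp_pmf': "z \<notin> B \<Longrightarrow> ennreal (pmf (Kp z) y) = ph d p B z y"
  using Kp_pmf[of z y] ph_fin[OF gf nr, of z y] by simp

lemma hkernel_notB: "z \<notin> B \<Longrightarrow> hkernel d p B (Some z) = map_pmf Some (Kp z)"
proof -
  assume z: "z \<notin> B"
  have c: "(\<integral>\<^sup>+y. ph d p B z y \<partial>count_space UNIV) = 1" using ph_sum[OF gf nr z] .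
  show ?thesis
  proof (rule pmf_eqI)
    fix s show "pmf (hkernel d p B (Some z)) s = pmf (map_pmf Some (Kp z)) s"
    proof (cases s)
      case None
      then show ?thesis using hkernel_pmf(2)[of z] c by (simp add: pmf_map_outside)
    next
      case (Some y)
      then show ?thesis using hkernel_pmf(1)[of z y] c z by (simp add: pmf_map_inj' Kp_pmf)
    qed
  qed
qed

end

context
  fixes d :: "'a::countable \<Rightarrow> nat pmf" and p :: "'a \<Rightarrow> 'a pmf" and B :: "'a set"
  assumes gf: "\<forall>u v. green d p u v < \<top>" and nr: "norming_region d p B"
begin

lemma hpath_Suc_notB: "z \<notin> B \<Longrightarrow> hpath d p B (Suc n) (Some z) =
   bind_pmf (Kp d p B z) (\<lambda>y. map_pmf (Cons (Some y)) (hpath d p B n (Some y)))"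
  by (simp add: hkernel_notB[OF gf nr] map_pmf_def bind_assoc_pmf bind_return_pmf)

lemma hpath_Suc_B: "z \<in> B \<Longrightarrow> hpath d p B (Suc n) (Some z) =
   map_pmf (Cons None) (hpath d p B n None)"
  by (simp add: hkernel_B[OF gf nr] bind_return_pmf)

lemma Pn_eq: "emeasure (measure_pmf (hpath d p B n (Some z))) {ws. \<exists>y\<in>B. Some y \<in> set (Some z # ws)}
   = En d p B n z / hfun d p B z"
proof (induction n arbitrary: z)
  case 0
  show ?case
    by (cases "z \<in> B") (auto simp: En_0 hfun_B h_ne0[OF gf nr])
next
  case (Suc n)
  show ?case
  proof (cases "z \<in> B")
    case True
    have "{ws. \<exists>y\<in>B. Some y \<in> set (Some z # ws)} = UNIV" using True by auto
    then show ?thesis using True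
      by (simp add: En_Suc hfun_B measure_pmf.emeasure_space_1[simplified])
  next
    case False
    let ?A = "{ws. \<exists>y\<in>B. Some y \<in> set (Some z # ws)}"
    have pre: "Cons (Some y) -` ?A = {ws. \<exists>y'\<in>B. Some y' \<in> set (Some y # ws)}" for y
      using False by auto
    have "emeasure (measure_pmf (hpath d p B (Suc n) (Some z))) ?A
        = (\<integral>\<^sup>+y. En d p B n y / hfun d p B y \<partial>Kp d p B z)"
      by (simp only: hpath_Suc_notB[OF False] emeasure_bind_pmf emeasure_map_pmf pre Suc.IH)
    also have "\<dots> = (\<integral>\<^sup>+y. ph d p B z y * (En d p B n y / hfun d p B y) \<partial>count_space UNIV)"
      by (simp add: nn_integral_measure_pmf Kp_pmf'[OF gf nr False])
    also have "\<dots> = (\<integral>\<^sup>+y. qmat d p z y * En d p B n y / hfun d p B z \<partial>count_space UNIV)"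
      using False h_pos[OF gf nr] h_fin[OF gf nr]
      by (intro nn_integral_cong) (simp add: ph_def ediv_cancel)
    also have "\<dots> = (\<integral>\<^sup>+y. qmat d p z y * En d p B n y \<partial>count_space UNIV) / hfun d p B z"
      by (simp add: divide_ennreal_def nn_integral_multc)
    also have "\<dots> = En d p B (Suc n) z / hfun d p B z"
      using False by (simp add: En_Suc q_int)
    finally show ?thesis .
  qed
qed

lemma part2: "(\<lambda>n. measure_pmf.prob (hpath d p B n (Some x))
              {ws. \<exists>y\<in>B. Some y \<in> set (Some x # ws)}) \<longlonglongrightarrow> 1"
proof -
  have "(\<lambda>n. En d p B n x) \<longlonglongrightarrow> hfun d p B x"
    unfolding hfun_SUP by (rule LIMSEQ_SUP[OF En_incseq])
  then have "(\<lambda>n. inverse (hfun d p B x) * En d p B n x) \<longlonglongrightarrow> inverse (hfun d p B x) * hfun d p B x"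
    by (rule ennreal_tendsto_cmult[rotated]) (use h_ne0[OF gf nr, of x] in \<open>simp add: less_top[symmetric]\<close>)
  moreover have "inverse (hfun d p B x) * hfun d p B x = 1"
    using ennreal_divide_self[of "hfun d p B x"] h_ne0[OF gf nr, of x] h_fin[OF gf nr, of x]
    by (simp add: divide_ennreal_def mult.commute)
  moreover have "(\<lambda>n. emeasure (measure_pmf (hpath d p B n (Some x))) {ws. \<exists>y\<in>B. Some y \<in> set (Some x # ws)})
     = (\<lambda>n. inverse (hfun d p B x) * En d p B n x)"
    by (rule ext, simp only: Pn_eq divide_ennreal_def mult.commute)
  ultimately have lim: "(\<lambda>n. emeasure (measure_pmf (hpath d p B n (Some x))) {ws. \<exists>y\<in>B. Some y \<in> set (Some x # ws)}) \<longlonglongrightarrow> ennreal 1"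
    by simp
  have "(\<lambda>n. enn2real (emeasure (measure_pmf (hpath d p B n (Some x))) {ws. \<exists>y\<in>B. Some y \<in> set (Some x # ws)})) \<longlonglongrightarrow> 1"
    by (rule tendsto_enn2real[OF lim]) simp
  then show ?thesis by (simp add: measure_def)
qed

end

lemma ennreal_pmf_bind: "ennreal (pmf (bind_pmf M f) x) = (\<integral>\<^sup>+a. ennreal (pmf (f a) x) \<partial>M)"
  by (simp add: emeasure_pmf_single[symmetric])

lemma seq_Cons_pair: "seq_pmf (M # Ms) = map_pmf (\<lambda>(a,l). a # l) (pair_pmf M (seq_pmf Ms))"
  by (simp add: pair_pmf_def map_bind_pmf map_pmf_def bind_assoc_pmf bind_return_pmf)

lemma inj_Cons_pair: "inj (\<lambda>(a::'b, l). a # l)"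
  by (auto simp: inj_on_def)

lemma pmf_seq_rep: "pmf (seq_pmf (replicate j P)) ws = (if length ws = j then prod_list (map (pmf P) ws) else 0)"
proof (induction j arbitrary: ws)
  case 0
  then show ?case by (simp add: indicator_def)
next
  case (Suc j)
  show ?case
  proof (cases ws)
    case Nil
    have "pmf (seq_pmf (P # replicate j P)) [] = 0"
      unfolding seq_Cons_pair by (rule pmf_map_outside) auto
    then show ?thesis using Nil by simp
  next
    case (Cons b l)
    have "pmf (seq_pmf (P # replicate j P)) (b # l) = pmf (pair_pmf P (seq_pmf (replicate j P))) (b, l)"
      unfolding seq_Cons_pair using pmf_map_inj'[OF inj_Cons_pair, of _ "(b, l)"] by simp
    then show ?thesis using Cons Suc.IH by (simp add: pmf_pair)
  qed
qed

lemma nn_integral_pair_count: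
  fixes f :: "'b::countable \<times> 'c::countable \<Rightarrow> ennreal"
  shows "(\<integral>\<^sup>+x. f x \<partial>count_space UNIV) = (\<integral>\<^sup>+a. \<integral>\<^sup>+b. f (a, b) \<partial>count_space UNIV \<partial>count_space UNIV)"
proof -
  interpret sf: sigma_finite_measure "count_space (UNIV::'c set)"
    by (rule sigma_finite_measure_count_space_countable) simp
  have "(\<integral>\<^sup>+a. \<integral>\<^sup>+b. f (a, b) \<partial>count_space UNIV \<partial>count_space UNIV)
      = integral\<^sup>N (count_space (UNIV::'b set) \<Otimes>\<^sub>M count_space (UNIV::'c set)) f"
    by (rule sf.nn_integral_fst) (simp add: pair_measure_countable)
  also have "\<dots> = (\<integral>\<^sup>+x. f x \<partial>count_space UNIV)"
    by (simp add: pair_measure_countable)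
  finally show ?thesis ..
qed

definition rmv :: "nat \<Rightarrow> 'b list \<Rightarrow> 'b list" where
  "rmv k ys = take k ys @ drop (Suc k) ys"

definition ins :: "nat \<Rightarrow> 'b \<Rightarrow> 'b list \<Rightarrow> 'b list" where
  "ins k y ws = take k ws @ y # drop k ws"

lemma map_if_split:
  assumes "k < length ys"
  shows "map (\<lambda>i. if i = k then A (ys ! i) else C (ys ! i)) [0..<length ys]
       = map C (take k ys) @ A (ys ! k) # map C (drop (Suc k) ys)"
proof (rule nth_equalityI)
  show "length (map (\<lambda>i. if i = k then A (ys ! i) else C (ys ! i)) [0..<length ys]) =
        length (map C (take k ys) @ A (ys ! k) # map C (drop (Suc k) ys))"
    using assms by simp
next
  fix i assume "i < length (map (\<lambda>i. if i = k then A (ys ! i) else C (ys ! i)) [0..<length ys])"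
  then have i: "i < length ys" by simp
  consider "i < k" | "i = k" | "i > k" by linarith
  then show "map (\<lambda>i. if i = k then A (ys ! i) else C (ys ! i)) [0..<length ys] ! i =
        (map C (take k ys) @ A (ys ! k) # map C (drop (Suc k) ys)) ! i"
  proof cases
    case 1 then show ?thesis using i assms by (simp add: nth_append)
  next
    case 2 then show ?thesis using i assms by (simp add: nth_append)
  next
    case 3
    have e: "i - k = Suc (i - Suc k)" using 3 by simp
    show ?thesis using i assms 3 by (simp add: nth_append e)
  qed
qed

lemma seq_mid:
  "map_pmf mset (seq_pmf (Ms1 @ M # Ms2)) = bind_pmf M (\<lambda>t. map_pmf (\<lambda>ts. mset ts + {#t#}) (seq_pmf (Ms1 @ Ms2)))"
proof (induction Ms1)
  case Nil
  then show ?case by (simp add: map_bind_pmf pmf.map_comp o_def)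
next
  case (Cons M' Ms1)
  have "map_pmf mset (seq_pmf ((M' # Ms1) @ M # Ms2))
      = bind_pmf M' (\<lambda>a. map_pmf (add_mset a) (map_pmf mset (seq_pmf (Ms1 @ M # Ms2))))"
    by (simp add: map_bind_pmf pmf.map_comp o_def)
  also have "\<dots> = bind_pmf M' (\<lambda>a. bind_pmf M (\<lambda>t. map_pmf (add_mset a) (map_pmf (\<lambda>ts. mset ts + {#t#}) (seq_pmf (Ms1 @ Ms2)))))"
    by (simp add: Cons map_bind_pmf)
  also have "\<dots> = bind_pmf M (\<lambda>t. bind_pmf M' (\<lambda>a. map_pmf (add_mset a) (map_pmf (\<lambda>ts. mset ts + {#t#}) (seq_pmf (Ms1 @ Ms2)))))"
    by (rule bind_commute_pmf)
  also have "\<dots> = bind_pmf M (\<lambda>t. map_pmf (\<lambda>ts. mset ts + {#t#}) (seq_pmf ((M' # Ms1) @ Ms2)))"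
    by (simp add: map_bind_pmf pmf.map_comp o_def add_mset_commute)
  finally show ?case .
qed


lemma ins_len: "k \<le> length ws \<Longrightarrow> length (ins k y ws) = Suc (length ws)"
  by (simp add: ins_def)
lemma ins_nth: "k \<le> length ws \<Longrightarrow> ins k y ws ! k = y"
  by (simp add: ins_def nth_append)
lemma rmv_ins: "k \<le> length ws \<Longrightarrow> rmv k (ins k y ws) = ws"
  by (simp add: ins_def rmv_def)
lemma ins_rmv: "k < length ys \<Longrightarrow> ins k (ys ! k) (rmv k ys) = ys"
  by (simp add: ins_def rmv_def min_def id_take_nth_drop[symmetric])
lemma rmv_len: "k < length ys \<Longrightarrow> length (rmv k ys) = length ys - 1"
  by (simp add: rmv_def)
lemma prod_ins: "prod_list (map f (ins k y ws)) = f y * prod_list (map f ws)" for f :: "'b \<Rightarrow> real"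
proof -
  have "prod_list (map f (ins k y ws)) = prod_list (map f (take k ws)) * (f y * prod_list (map f (drop k ws)))"
    by (simp add: ins_def)
  also have "\<dots> = f y * (prod_list (map f (take k ws)) * prod_list (map f (drop k ws)))"
    by (simp add: ac_simps)
  also have "prod_list (map f (take k ws)) * prod_list (map f (drop k ws)) = prod_list (map f ws)"
    by (simp add: prod_list.append[symmetric] map_append[symmetric] del: prod_list.append map_append)
  finally show ?thesis .
qed

lemma pre_char:
  assumes "k < length ys"
  shows "(ys ! k = y \<and> rmv k ys = ws) \<longleftrightarrow> (k \<le> length ws \<and> ys = ins k y ws)"
  using assms ins_rmv[OF assms] rmv_len[OF assms] ins_nth rmv_ins by auto

context
  fixes d :: "'a::countable \<Rightarrow> nat pmf" and p :: "'a \<Rightarrow> 'a pmf" and B :: "'a set"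
  assumes gf: "\<forall>u v. green d p u v < \<top>" and nr: "norming_region d p B"
begin

definition hr :: "'a \<Rightarrow> real" where "hr z = enn2real (hfun d p B z)"
definition Mr :: "'a \<Rightarrow> real" where "Mr z = enn2real (mean_off d z)"

lemma hr_e: "ennreal (hr z) = hfun d p B z"
  using h_fin[OF gf nr, of z] by (simp add: hr_def)
lemma hr_pos: "hr z > 0"
  using h_fin[OF gf nr, of z] h_pos[OF gf nr, of z] by (simp add: hr_def enn2real_positive_iff)
lemma Mr_e: "z \<notin> B \<Longrightarrow> ennreal (Mr z) = mean_off d z"
  using m_fin[OF gf nr, of z] by (simp add: Mr_def)
lemma Mr_pos: "z \<notin> B \<Longrightarrow> Mr z > 0"
  using m_fin[OF gf nr, of z] m_pos[OF gf nr, of z] by (simp add: Mr_def enn2real_positive_iff)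

lemma dsb_pmf:
  assumes z: "z \<notin> B"
  shows "pmf (dsb d z) k = real k * pmf (d z) k / Mr z"
proof -
  have nn: "\<And>k. 0 \<le> real k * pmf (d z) k / Mr z" using Mr_pos[OF z] by simp
  have "(\<integral>\<^sup>+k. ennreal (real k * pmf (d z) k / Mr z) \<partial>count_space UNIV)
      = (\<integral>\<^sup>+k. ennreal (pmf (d z) k) * ennreal (real k) * inverse (ennreal (Mr z)) \<partial>count_space UNIV)"
    using Mr_pos[OF z]
    by (intro nn_integral_cong) (simp add: divide_ennreal[symmetric] divide_ennreal_def ennreal_mult'' mult.commute)
  also have "\<dots> = mean_off d z * inverse (mean_off d z)"
    by (simp add: nn_integral_multc Mr_e[OF z] mean_off_def nn_integral_measure_pmf)
  also have "\<dots> = 1"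
    using ennreal_divide_self[of "mean_off d z"] m_pos[OF gf nr z] m_fin[OF gf nr z]
    by (simp add: divide_ennreal_def)
  finally have norm: "(\<integral>\<^sup>+k. ennreal (real k * pmf (d z) k / Mr z) \<partial>count_space UNIV) = 1"
    by (simp add: Mr_def)
  show ?thesis
    unfolding dsb_def using pmf_embed_pmf[OF _ norm[unfolded Mr_def]] nn[unfolded Mr_def]
    by (simp add: Mr_def)
qed

lemma dsb_pmf0: "z \<notin> B \<Longrightarrow> pmf (dsb d z) 0 = 0"
  by (simp add: dsb_pmf)


definition SM :: "'a \<Rightarrow> 'a list pmf" where
  "SM z = bind_pmf (d z) (\<lambda>n. seq_pmf (replicate n (p z)))"

lemma pmf_SM: "ennreal (pmf (SM z) ys) = ennreal (pmf (d z) (length ys)) * ennreal (prod_list (map (pmf (p z)) ys))"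
proof -
  have "ennreal (pmf (SM z) ys) = (\<integral>\<^sup>+n. ennreal (pmf (d z) n) * ennreal (if length ys = n then prod_list (map (pmf (p z)) ys) else 0) \<partial>count_space UNIV)"
    by (simp add: SM_def ennreal_pmf_bind pmf_seq_rep nn_integral_measure_pmf)
  also have "\<dots> = (\<integral>\<^sup>+n. (if length ys = n then ennreal (pmf (d z) n) * ennreal (prod_list (map (pmf (p z)) ys)) else 0) \<partial>count_space UNIV)"
    by (intro nn_integral_cong) simp
  also have "\<dots> = ennreal (pmf (d z) (length ys)) * ennreal (prod_list (map (pmf (p z)) ys))"
    by (rule int_single')
  finally show ?thesis .
qed

lemma int_SM: "(\<integral>\<^sup>+ys. sum_list (map (hfun d p B) ys) \<partial>SM z) = mean_off d z * (\<integral>\<^sup>+y. hfun d p B y \<partial>p z)"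
proof -
  have "(\<integral>\<^sup>+ys. sum_list (map (hfun d p B) ys) \<partial>SM z) = (\<integral>\<^sup>+n. of_nat n * (\<integral>\<^sup>+y. hfun d p B y \<partial>p z) \<partial>d z)"
    by (simp add: SM_def nn_integral_seq_sum sum_list_replicate_ennreal)
  also have "\<dots> = mean_off d z * (\<integral>\<^sup>+y. hfun d p B y \<partial>p z)"
    by (simp add: nn_integral_multc mean_off_def ennreal_of_nat_eq_real_of_nat)
  finally show ?thesis .
qed

definition bo_g :: "'a \<Rightarrow> 'a list \<Rightarrow> nat \<Rightarrow> real" where
  "bo_g z ys k = (if k < length ys then pmf (d z) (length ys) * prod_list (map (pmf (p z)) ys) * hr (ys ! k) / hr z else 0)"

lemma bo_g_nn: "0 \<le> bo_g z ys k"
proof -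
  have "0 \<le> hr z" "0 \<le> hr (ys ! k)" using hr_pos[of z] hr_pos[of "ys ! k"] by auto
  moreover have "0 \<le> prod_list (map (pmf (p z)) ys)" by (rule prod_list_nonneg) auto
  ultimately show ?thesis unfolding bo_g_def by simp
qed

lemma bo_fun_eq:
  "(\<lambda>(ys, k). (let h = (\<lambda>y. enn2real (hfun d p B y)); S = sum_list (map h ys) in
      if k < length ys then
        (1 / h z) * pmf (d z) (length ys) * prod_list (map (pmf (p z)) ys) * S * (h (ys ! k) / S)
      else 0)) = (\<lambda>x. bo_g z (fst x) (snd x))"
proof (intro ext)
  fix x :: "'a list \<times> nat"
  obtain ys k where x: "x = (ys, k)" by (cases x)
  show "(\<lambda>(ys, k). (let h = (\<lambda>y. enn2real (hfun d p B y)); S = sum_list (map h ys) in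
      if k < length ys then
        (1 / h z) * pmf (d z) (length ys) * prod_list (map (pmf (p z)) ys) * S * (h (ys ! k) / S)
      else 0)) x = bo_g z (fst x) (snd x)"
  proof (cases "k < length ys")
    case False then show ?thesis by (simp add: x bo_g_def)
  next
    case k: True
    have "hr (ys ! k) \<le> sum_list (map hr ys)"
      by (rule member_le_sum_list) (use k hr_pos in \<open>auto intro: less_imp_le\<close>)
    then have S: "sum_list (map hr ys) \<noteq> 0" using hr_pos[of "ys ! k"] by linarith
    have e: "(\<lambda>y. enn2real (hfun d p B y)) = hr" by (simp add: hr_def fun_eq_iff)
    show ?thesis using k S by (simp add: x bo_g_def Let_def e field_simps)
  qed
qed

lemma ennreal_4:
  fixes a b c e :: real
  assumes "0 \<le> a" "0 \<le> b" "0 \<le> c" "0 < e"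
  shows "ennreal (a * (b * c) / e) = ennreal a * (ennreal b * (ennreal c * inverse (ennreal e)))"
proof -
  have "ennreal (a * (b * c) / e) = ennreal (a * (b * c)) / ennreal e"
    using assms by (simp add: divide_ennreal)
  also have "\<dots> = ennreal a * (ennreal b * (ennreal c * inverse (ennreal e)))"
    using assms by (simp add: ennreal_mult divide_ennreal_def mult.assoc)
  finally show ?thesis .
qed

lemma bo_norm:
  assumes z: "z \<notin> B"
  shows "(\<integral>\<^sup>+x. ennreal (bo_g z (fst x) (snd x)) \<partial>count_space UNIV) = 1"
proof -
  have inner: "(\<integral>\<^sup>+k. ennreal (bo_g z ys k) \<partial>count_space UNIV)
     = ennreal (pmf (SM z) ys) * (sum_list (map (hfun d p B) ys) * inverse (hfun d p B z))" for ys
  proof -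
    have "(\<integral>\<^sup>+k. ennreal (bo_g z ys k) \<partial>count_space UNIV) = (\<Sum>k\<in>{..<length ys}. ennreal (bo_g z ys k))"
      by (rule nn_integral_count_space') (auto simp: bo_g_def)
    also have "\<dots> = (\<Sum>k\<in>{..<length ys}. ennreal (pmf (SM z) ys) * (hfun d p B (ys ! k) * inverse (hfun d p B z)))"
    proof (intro sum.cong refl)
      fix k assume "k \<in> {..<length ys}"
      then have k: "k < length ys" by simp
      have pn: "0 \<le> prod_list (map (pmf (p z)) ys)" by (rule prod_list_nonneg) auto
      have "ennreal (bo_g z ys k) = ennreal (pmf (d z) (length ys) * (prod_list (map (pmf (p z)) ys) * hr (ys ! k)) / hr z)"
        using k by (simp add: bo_g_def mult.assoc)
      also have "\<dots> = ennreal (pmf (d z) (length ys)) * (ennreal (prod_list (map (pmf (p z)) ys)) * (ennreal (hr (ys ! k)) * inverse (ennreal (hr z))))"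
        using hr_pos[of z] hr_pos[of "ys ! k"] pn by (intro ennreal_4) auto
      finally show "ennreal (bo_g z ys k) = ennreal (pmf (SM z) ys) * (hfun d p B (ys ! k) * inverse (hfun d p B z))"
        by (simp add: pmf_SM hr_e mult.assoc)
    qed
    also have "\<dots> = ennreal (pmf (SM z) ys) * ((\<Sum>k\<in>{..<length ys}. hfun d p B (ys ! k)) * inverse (hfun d p B z))"
      by (simp add: sum_distrib_left sum_distrib_right)
    also have "(\<Sum>k\<in>{..<length ys}. hfun d p B (ys ! k)) = sum_list (map (hfun d p B) ys)"
      by (simp add: sum_list_sum_nth atLeast0LessThan)
    finally show ?thesis .
  qed
  have "(\<integral>\<^sup>+x. ennreal (bo_g z (fst x) (snd x)) \<partial>count_space UNIV)
      = (\<integral>\<^sup>+ys. ennreal (pmf (SM z) ys) * (sum_list (map (hfun d p B) ys) * inverse (hfun d p B z)) \<partial>count_space UNIV)"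
    by (simp add: nn_integral_pair_count inner)
  also have "\<dots> = (\<integral>\<^sup>+ys. sum_list (map (hfun d p B) ys) \<partial>SM z) * inverse (hfun d p B z)"
    by (simp add: nn_integral_measure_pmf nn_integral_multc[symmetric] mult.assoc)
  also have "\<dots> = hfun d p B z * inverse (hfun d p B z)"
    by (simp add: int_SM hfun_harm[OF z])
  also have "\<dots> = 1"
    using ennreal_divide_self[of "hfun d p B z"] h_ne0[OF gf nr, of z] h_fin[OF gf nr, of z]
    by (simp add: divide_ennreal_def)
  finally show ?thesis .
qed

lemma bo_pmf:
  assumes z: "z \<notin> B"
  shows "pmf (biased_off d p B z) (ys, k) = bo_g z ys k"
proof -
  have "pmf (biased_off d p B z) x = bo_g z (fst x) (snd x)" for x
    unfolding biased_off_def bo_fun_eq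
    by (rule pmf_embed_pmf[OF bo_g_nn bo_norm[OF z]])
  then show ?thesis by simp
qed

lemma bo_support: "z \<notin> B \<Longrightarrow> (ys, k) \<in> set_pmf (biased_off d p B z) \<Longrightarrow> k < length ys"
  by (auto simp: set_pmf_iff bo_pmf bo_g_def split: if_splits)

end

lemma pmf_map_Pair: "pmf (map_pmf (Pair y') S) (y, ws) = (if y' = y then pmf S ws else 0)"
proof (cases "y' = y")
  case True
  have "inj (Pair y')" by (auto simp: inj_on_def)
  then show ?thesis using True pmf_map_inj'[of "Pair y'" S ws] by simp
next
  case False
  then show ?thesis by (auto intro!: pmf_map_outside)
qed

lemma int_single_mult:
  fixes c :: "'b \<Rightarrow> ennreal"
  shows "(\<integral>\<^sup>+z. c z * (if z = x then X else 0) \<partial>count_space UNIV) = c x * X"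
  using int_single[of x "\<lambda>z. c z * X"] by (simp add: if_distrib cong: if_cong)

context
  fixes d :: "'a::countable \<Rightarrow> nat pmf" and p :: "'a \<Rightarrow> 'a pmf" and B :: "'a set"
  assumes gf: "\<forall>u v. green d p u v < \<top>" and nr: "norming_region d p B"
begin

definition J :: "'a \<Rightarrow> ('a \<times> 'a list) pmf" where
  "J z = bind_pmf (Kp d p B z) (\<lambda>y. bind_pmf (dsb d z) (\<lambda>k. map_pmf (Pair y) (seq_pmf (replicate (k - 1) (p z)))))"

lemma Kp_real: "z \<notin> B \<Longrightarrow> pmf (Kp d p B z) y = Mr d z * pmf (p z) y * hr d p B y / hr d p B z"
proof -
  assume z: "z \<notin> B"
  have pos: "0 < hr d p B z" "0 < hr d p B y" "0 < Mr d z"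
    using hr_pos[OF gf nr] Mr_pos[OF gf nr z] by auto
  have "ph d p B z y = ennreal (Mr d z) * ennreal (pmf (p z) y) * ennreal (hr d p B y) * inverse (ennreal (hr d p B z))"
    using z by (simp add: ph_def qmat_def Mr_e[OF gf nr z] hr_e[OF gf nr] divide_ennreal_def)
  also have "\<dots> = ennreal (Mr d z * pmf (p z) y * hr d p B y / hr d p B z)"
    using pos by (simp add: divide_ennreal[symmetric] ennreal_mult divide_ennreal_def)
  finally show ?thesis using pos by (simp add: Kp_pmf[OF gf nr z])
qed

lemma J_pmf:
  assumes z: "z \<notin> B"
  shows "ennreal (pmf (J z) (y, ws)) = ennreal (pmf (Kp d p B z) y) * (ennreal (pmf (dsb d z) (Suc (length ws))) * ennreal (prod_list (map (pmf (p z)) ws)))"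
proof -
  let ?X = "\<integral>\<^sup>+k. ennreal (pmf (seq_pmf (replicate (k - 1) (p z))) ws) \<partial>dsb d z"
  have "ennreal (pmf (J z) (y, ws)) = (\<integral>\<^sup>+y'. (\<integral>\<^sup>+k. ennreal (pmf (map_pmf (Pair y') (seq_pmf (replicate (k - 1) (p z)))) (y, ws)) \<partial>dsb d z) \<partial>Kp d p B z)"
    by (simp add: J_def ennreal_pmf_bind)
  also have "\<dots> = (\<integral>\<^sup>+y'. (if y' = y then ?X else 0) \<partial>Kp d p B z)"
    by (intro nn_integral_cong) (simp add: pmf_map_Pair)
  also have "\<dots> = ennreal (pmf (Kp d p B z) y) * ?X"
    by (simp add: nn_integral_measure_pmf int_single_mult)
  also have "?X = (\<integral>\<^sup>+k. ennreal (pmf (dsb d z) k) * ennreal (if length ws = k - 1 then prod_list (map (pmf (p z)) ws) else 0) \<partial>count_space UNIV)"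
    by (simp add: nn_integral_measure_pmf pmf_seq_rep)
  also have "\<dots> = (\<Sum>k\<in>{Suc (length ws)}. ennreal (pmf (dsb d z) k) * ennreal (if length ws = k - 1 then prod_list (map (pmf (p z)) ws) else 0))"
  proof (rule nn_integral_count_space')
    fix k assume "k \<notin> {Suc (length ws)}"
    then show "ennreal (pmf (dsb d z) k) * ennreal (if length ws = k - 1 then prod_list (map (pmf (p z)) ws) else 0) = 0"
      using dsb_pmf0[OF gf nr z] by (cases k) auto
  qed auto
  finally show ?thesis by simp
qed

lemma BO_map_pmf:
  assumes z: "z \<notin> B"
  shows "ennreal (pmf (map_pmf (\<lambda>(ys, k). (ys ! k, rmv k ys)) (biased_off d p B z)) (y, ws))
    = of_nat (Suc (length ws)) * ennreal (bo_g d p B z (ins 0 y ws) 0)"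
proof -
  let ?g = "\<lambda>(ys::'a list, k::nat). (ys ! k, rmv k ys)"
  let ?A = "?g -` {(y, ws)}"
  let ?L = "length ws"
  have bo_ins: "bo_g d p B z (ins k y ws) k = bo_g d p B z (ins 0 y ws) 0" if "k \<le> ?L" for k
  proof -
    have a: "length (ins k y ws) = Suc ?L" "ins k y ws ! k = y" using that by (auto simp: ins_len ins_nth)
    have b: "length (ins 0 y ws) = Suc ?L" "ins 0 y ws ! 0 = y" by (auto simp: ins_len ins_nth)
    have k: "k < Suc ?L" using that by simp
    show ?thesis unfolding bo_g_def[OF gf nr] by (simp only: a b prod_ins) (simp add: k)
  qed
  have "ennreal (pmf (map_pmf ?g (biased_off d p B z)) (y, ws)) = emeasure (measure_pmf (biased_off d p B z)) ?A"
    by (simp add: emeasure_pmf_single[symmetric])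
  also have "\<dots> = (\<integral>\<^sup>+x. indicator ?A x \<partial>biased_off d p B z)"
    by simp
  also have "\<dots> = (\<integral>\<^sup>+x. ennreal (bo_g d p B z (fst x) (snd x)) * indicator ?A x \<partial>count_space UNIV)"
    unfolding nn_integral_measure_pmf
    by (intro nn_integral_cong) (auto simp: bo_pmf[OF gf nr z] split: prod.splits split_indicator)
  also have "\<dots> = (\<integral>\<^sup>+ys. \<integral>\<^sup>+k. ennreal (bo_g d p B z ys k) * indicator ?A (ys, k) \<partial>count_space UNIV \<partial>count_space UNIV)"
    by (simp add: nn_integral_pair_count)
  also have "\<dots> = (\<integral>\<^sup>+k. \<integral>\<^sup>+ys. ennreal (bo_g d p B z ys k) * indicator ?A (ys, k) \<partial>count_space UNIV \<partial>count_space UNIV)"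
    by (rule nn_integral_count_space_nn_integral) auto
  also have "\<dots> = (\<integral>\<^sup>+k. (if k \<le> ?L then ennreal (bo_g d p B z (ins 0 y ws) 0) else 0) \<partial>count_space UNIV)"
  proof (intro nn_integral_cong)
    fix k
    show "(\<integral>\<^sup>+ys. ennreal (bo_g d p B z ys k) * indicator ?A (ys, k) \<partial>count_space UNIV)
        = (if k \<le> ?L then ennreal (bo_g d p B z (ins 0 y ws) 0) else 0)"
    proof (cases "k \<le> ?L")
      case True
      have "(\<integral>\<^sup>+ys. ennreal (bo_g d p B z ys k) * indicator ?A (ys, k) \<partial>count_space UNIV)
          = (\<Sum>ys\<in>{ins k y ws}. ennreal (bo_g d p B z ys k) * indicator ?A (ys, k))"
      proof (rule nn_integral_count_space')
        fix ys assume "ys \<notin> {ins k y ws}"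
        then show "ennreal (bo_g d p B z ys k) * indicator ?A (ys, k) = 0"
          using pre_char[of k ys y ws] by (auto simp: bo_g_def[OF gf nr] split: split_indicator)
      qed auto
      also have "\<dots> = ennreal (bo_g d p B z (ins 0 y ws) 0)"
        using True bo_ins[OF True] by (simp add: ins_nth rmv_ins split: split_indicator)
      finally show ?thesis using True by simp
    next
      case False
      have z0: "ennreal (bo_g d p B z ys k) * indicator ?A (ys, k) = 0" for ys
        using pre_char[of k ys y ws] False by (auto simp: bo_g_def[OF gf nr] split: split_indicator)
      have "(\<integral>\<^sup>+ys. ennreal (bo_g d p B z ys k) * indicator ?A (ys, k) \<partial>count_space UNIV) = (\<integral>\<^sup>+(ys::'a list). 0 \<partial>count_space UNIV)"
        by (rule nn_integral_cong, rule z0)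
      then show ?thesis using False by simp
    qed
  qed
  also have "\<dots> = (\<Sum>k\<in>{..?L}. (if k \<le> ?L then ennreal (bo_g d p B z (ins 0 y ws) 0) else 0))"
    by (rule nn_integral_count_space') auto
  also have "\<dots> = (\<Sum>k\<in>{..?L}. ennreal (bo_g d p B z (ins 0 y ws) 0))"
    by (rule sum.cong) auto
  also have "\<dots> = of_nat (Suc ?L) * ennreal (bo_g d p B z (ins 0 y ws) 0)"
    by simp
  finally show ?thesis .
qed


lemma L2:
  assumes z: "z \<notin> B"
  shows "map_pmf (\<lambda>(ys, k). (ys ! k, rmv k ys)) (biased_off d p B z) = J z"
proof (rule pmf_eqI)
  fix a :: "'a \<times> 'a list"
  obtain y ws where a: "a = (y, ws)" by (cases a)
  let ?L = "length ws"
  let ?P = "prod_list (map (pmf (p z)) ws)"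
  have pn: "0 \<le> ?P" by (rule prod_list_nonneg) auto
  have Mp: "0 < Mr d z" using Mr_pos[OF gf nr z] .
  have hz: "0 < hr d p B z" using hr_pos[OF gf nr] .
  define R where "R = real (Suc ?L) * (pmf (d z) (Suc ?L) * (pmf (p z) y * ?P) * hr d p B y / hr d p B z)"
  have "ennreal (pmf (map_pmf (\<lambda>(ys, k). (ys ! k, rmv k ys)) (biased_off d p B z)) a)
      = of_nat (Suc ?L) * ennreal (bo_g d p B z (ins 0 y ws) 0)"
    using BO_map_pmf[OF z] a by simp
  also have "\<dots> = ennreal (real (Suc ?L) * bo_g d p B z (ins 0 y ws) 0)"
    by (subst ennreal_mult) (auto simp: bo_g_nn[OF gf nr] ennreal_of_nat_eq_real_of_nat)
  also have "bo_g d p B z (ins 0 y ws) 0 = pmf (d z) (Suc ?L) * (pmf (p z) y * ?P) * hr d p B y / hr d p B z"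
    by (simp add: bo_g_def[OF gf nr] ins_def)
  also have "ennreal (real (Suc ?L) * (pmf (d z) (Suc ?L) * (pmf (p z) y * ?P) * hr d p B y / hr d p B z)) = ennreal R"
    by (simp add: R_def)
  finally have l: "pmf (map_pmf (\<lambda>(ys, k). (ys ! k, rmv k ys)) (biased_off d p B z)) a = R"
    using hz hr_pos[OF gf nr, of y] pn by (simp add: R_def)
  have "ennreal (pmf (J z) a) = ennreal (pmf (Kp d p B z) y) * (ennreal (pmf (dsb d z) (Suc ?L)) * ennreal ?P)"
    using J_pmf[OF z] a by simp
  also have "\<dots> = ennreal (pmf (Kp d p B z) y * (pmf (dsb d z) (Suc ?L) * ?P))"
    using pn by (simp add: ennreal_mult)
  finally have r: "pmf (J z) a = pmf (Kp d p B z) y * (pmf (dsb d z) (Suc ?L) * ?P)"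
    using pn by (simp add: ennreal_inj)
  have "pmf (Kp d p B z) y * (pmf (dsb d z) (Suc ?L) * ?P) = R"
    using Mp hz by (simp add: Kp_real[OF z] dsb_pmf[OF gf nr z] R_def field_simps)
  then show "pmf (map_pmf (\<lambda>(ys, k). (ys ! k, rmv k ys)) (biased_off d p B z)) a = pmf (J z) a"
    using l r by simp
qed

end

context
  fixes d :: "'a::countable \<Rightarrow> nat pmf" and p :: "'a \<Rightarrow> 'a pmf" and B :: "'a set"
  assumes gf: "\<forall>u v. green d p u v < \<top>" and nr: "norming_region d p B"
begin

lemma bbmc_inner:
  assumes k: "k < length ys"
  shows "map_pmf (\<lambda>ts. UNode (z, Blue) (mset ts))
          (seq_pmf (map (\<lambda>i. if i = k then bbmc d p B n (ys ! i) else bmc d p n (ys ! i)) [0..<length ys]))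
       = bind_pmf (bbmc d p B n (ys ! k)) (\<lambda>t. map_pmf (\<lambda>ts. UNode (z, Blue) (mset ts + {#t#})) (seq_pmf (map (bmc d p n) (rmv k ys))))"
proof -
  have "map_pmf (\<lambda>ts. UNode (z, Blue) (mset ts))
          (seq_pmf (map (\<lambda>i. if i = k then bbmc d p B n (ys ! i) else bmc d p n (ys ! i)) [0..<length ys]))
      = map_pmf (UNode (z, Blue)) (map_pmf mset (seq_pmf (map (bmc d p n) (take k ys) @ bbmc d p B n (ys ! k) # map (bmc d p n) (drop (Suc k) ys))))"
    by (simp add: map_if_split[OF k] pmf.map_comp o_def)
  also have "\<dots> = map_pmf (UNode (z, Blue)) (bind_pmf (bbmc d p B n (ys ! k)) (\<lambda>t. map_pmf (\<lambda>ts. mset ts + {#t#}) (seq_pmf (map (bmc d p n) (take k ys) @ map (bmc d p n) (drop (Suc k) ys)))))"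
    by (simp only: seq_mid)
  also have "\<dots> = bind_pmf (bbmc d p B n (ys ! k)) (\<lambda>t. map_pmf (\<lambda>ts. UNode (z, Blue) (mset ts + {#t#})) (seq_pmf (map (bmc d p n) (rmv k ys))))"
    by (simp add: map_bind_pmf pmf.map_comp o_def rmv_def)
  finally show ?thesis .
qed

lemma part1: "bind_pmf (hpath d p B n (Some z)) (deco d p B n z) = bbmc d p B n z"
proof (induction n arbitrary: z)
  case 0
  then show ?case by (simp add: bind_return_pmf)
next
  case (Suc n)
  show ?case
  proof (cases "z \<in> B")
    case True
    then show ?thesis
      by (simp add: hkernel_B[OF gf nr] bind_return_pmf bind_map_pmf)
  next
    case False
    define W where "W t ws = map_pmf (\<lambda>ts. UNode (z, Blue) (mset ts + {#t#})) (seq_pmf (map (bmc d p n) ws))" for t ws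
    define G where "G = (\<lambda>(y, ws). bind_pmf (bbmc d p B n y) (\<lambda>t. W t ws))"
    define Rz where "Rz t = bind_pmf (dsb d z) (\<lambda>k. bind_pmf (seq_pmf (replicate (k - 1) (p z))) (\<lambda>ws. W t ws))" for t
    have deco_eq: "deco d p B (Suc n) z (Some y # ws) = bind_pmf (deco d p B n y ws) Rz" for y ws
      using False by (simp add: bind_map_pmf Rz_def[abs_def] W_def[abs_def])
    have "bind_pmf (hpath d p B (Suc n) (Some z)) (deco d p B (Suc n) z)
        = bind_pmf (Kp d p B z) (\<lambda>y. bind_pmf (bind_pmf (hpath d p B n (Some y)) (deco d p B n y)) Rz)"
      by (simp only: hpath_Suc_notB[OF gf nr False] bind_assoc_pmf bind_map_pmf deco_eq)
    also have "\<dots> = bind_pmf (Kp d p B z) (\<lambda>y. bind_pmf (bbmc d p B n y) Rz)"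
      by (simp only: Suc.IH)
    also have "\<dots> = bind_pmf (Kp d p B z) (\<lambda>y. bind_pmf (dsb d z) (\<lambda>k. bind_pmf (seq_pmf (replicate (k - 1) (p z))) (\<lambda>ws. bind_pmf (bbmc d p B n y) (\<lambda>t. W t ws))))"
    proof -
      have "bind_pmf (bbmc d p B n y) Rz = bind_pmf (dsb d z) (\<lambda>k. bind_pmf (seq_pmf (replicate (k - 1) (p z))) (\<lambda>ws. bind_pmf (bbmc d p B n y) (\<lambda>t. W t ws)))" for y
        unfolding Rz_def
        by (subst bind_commute_pmf) (subst bind_commute_pmf, rule refl)
      then show ?thesis by simp
    qed
    also have "\<dots> = bind_pmf (J d p B z) G"
      by (simp add: J_def[OF gf nr] bind_assoc_pmf bind_map_pmf G_def)
    also have "\<dots> = bind_pmf (map_pmf (\<lambda>(ys, k). (ys ! k, rmv k ys)) (biased_off d p B z)) G"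
      by (simp add: L2[OF gf nr False])
    also have "\<dots> = bind_pmf (biased_off d p B z) (\<lambda>(ys, k). map_pmf (\<lambda>ts. UNode (z, Blue) (mset ts))
          (seq_pmf (map (\<lambda>i. if i = k then bbmc d p B n (ys ! i) else bmc d p n (ys ! i)) [0..<length ys])))"
      unfolding bind_map_pmf
    proof (rule bind_pmf_cong[OF refl])
      fix x assume x: "x \<in> set_pmf (biased_off d p B z)"
      obtain ys k where xe: "x = (ys, k)" by (cases x)
      have k: "k < length ys" using bo_support[OF gf nr False] x xe by blast
      show "G ((\<lambda>(ys, k). (ys ! k, rmv k ys)) x) = (\<lambda>(ys, k). map_pmf (\<lambda>ts. UNode (z, Blue) (mset ts))
          (seq_pmf (map (\<lambda>i. if i = k then bbmc d p B n (ys ! i) else bmc d p n (ys ! i)) [0..<length ys]))) x"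
        by (simp add: xe G_def W_def bbmc_inner[OF k])
    qed
    also have "\<dots> = bbmc d p B (Suc n) z"
      using False by simp
    finally show ?thesis .
  qed
qed

end

theorem mainTheorem3:
  fixes d :: "'a::countable \<Rightarrow> nat pmf" and p :: "'a \<Rightarrow> 'a pmf"
    and B :: "'a set" and x :: 'a
  assumes green_finite: "\<forall>u v. green d p u v < \<top>"
    and norming: "norming_region d p B"
  shows "(\<forall>n. bind_pmf (hpath d p B n (Some x)) (\<lambda>ws. deco d p B n x ws) = bbmc d p B n x)
    \<and> (\<lambda>n. measure_pmf.prob (hpath d p B n (Some x))
              {ws. \<exists>y\<in>B. Some y \<in> set (Some x # ws)}) \<longlonglongrightarrow> 1"
proof
  show "\<forall>n. bind_pmf (hpath d p B n (Some x)) (\<lambda>ws. deco d p B n x ws) = bbmc d p B n x"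
    using part1[OF green_finite norming] by simp
  show "(\<lambda>n. measure_pmf.prob (hpath d p B n (Some x))
              {ws. \<exists>y\<in>B. Some y \<in> set (Some x # ws)}) \<longlonglongrightarrow> 1"
    by (rule part2[OF green_finite norming])
qed

end
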